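(* Let $0\le\alpha<n$, $m$ a nonnegative integer, $0<\eta\le1$, $0<\delta<\min\{\eta,(n-\alpha)/m\}$, $\tilde\alpha=m\delta+\alpha$. For every $1\le r\le\infty$ and every $\tilde\delta\le\min\{\delta,\tilde\alpha-n/r\}$, excluding the case $\tilde\delta=\delta$ when $\tilde\alpha-n/r=\delta$, there exists a pair of weights $(w,v)$ with $v$ not identically zero such that $(w,v)\in\mathbb{H}(r,\tilde\alpha,\tilde\delta)$.
   Context: A weight is a nonnegative locally integrable function; $w(B)=\int_Bw$; $x_B$ the center of $B$; $r'$ the conjugate exponent. $(w,v)\in\mathbb{H}(r,\tilde\alpha,\tilde\delta)$ means that for some $C$ and every ball $B$: if $1<r\le\infty$, $|B|^{(\delta-\tilde\delta)/n}\big(\int\frac{v^{r'}(y)}{(|B|^{1/n}+|x_B-y|)^{r'(n-\tilde\alpha+\delta)}}dy\big)^{1/r'}\le C\frac{w(B)}{|B|}$; if $r=1$, $|B|^{(\delta-\tilde\delta)/n}\big\|\frac{v(\cdot)}{(|B|^{1/n}+|x_B-\cdot|)^{n-\tilde\alpha+\delta}}\big\|_\infty\le C\frac{w(B)}{|B|}$. If $m=0$, $(n-\alpha)/m$ is read as $+\infty$. *)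

theory Defs
  imports "HOL-Analysis.Analysis" "HOL-Probability.Essential_Supremum"
begin

definition weight :: "('a::euclidean_space \<Rightarrow> real) \<Rightarrow> bool" where
  "weight w \<longleftrightarrow> w \<in> borel_measurable lebesgue \<and> (\<forall>x. 0 \<le> w x) \<and>
     (\<forall>x r. set_integrable lebesgue (cball x r) w)"

definition wmeas :: "('a::euclidean_space \<Rightarrow> real) \<Rightarrow> 'a \<Rightarrow> real \<Rightarrow> real" where
  "wmeas w x t = (LINT y:ball x t|lebesgue. w y)"

definition bvol :: "'a::euclidean_space \<Rightarrow> real \<Rightarrow> real" where
  "bvol x t = measure lebesgue (ball x t)"

text \<open>conjugate exponent r' of r \<in> [1,\<infinity>] (used only for 1 < r)\<close>
definition conj_exp :: "ereal \<Rightarrow> real" where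
  "conj_exp r = (if r = \<infinity> then 1 else real_of_ereal r / (real_of_ereal r - 1))"

definition n_over :: "real \<Rightarrow> ereal \<Rightarrow> real" where
  "n_over n r = (if r = \<infinity> then 0 else n / real_of_ereal r)"

text \<open>The condition (w,v) \<in> H(r, \<alpha>~, \<delta>~), with the parameter \<delta> made explicit.\<close>
definition H_cond :: "ereal \<Rightarrow> real \<Rightarrow> real \<Rightarrow> real \<Rightarrow>
    ('a::euclidean_space \<Rightarrow> real) \<Rightarrow> ('a \<Rightarrow> real) \<Rightarrow> bool" where
  "H_cond r a dt d w v \<longleftrightarrow>
    (let n = real DIM('a) in
     \<exists>C::real. \<forall>x t. t > 0 \<longrightarrow>
       (if r = 1 then
          (let S = esssup lebesgue
                (\<lambda>y. ereal (v y / (bvol x t powr (1/n) + norm (x - y)) powr (n - a + d)))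
           in S < \<infinity> \<and>
              bvol x t powr ((d - dt)/n) * real_of_ereal S \<le> C * wmeas w x t / bvol x t)
        else
          (let p = conj_exp r;
               I = (\<integral>\<^sup>+ y. ennreal (v y powr p /
                      (bvol x t powr (1/n) + norm (x - y)) powr (p * (n - a + d))) \<partial>lebesgue)
           in I < \<infinity> \<and>
              bvol x t powr ((d - dt)/n) * enn2real I powr (1/p) \<le> C * wmeas w x t / bvol x t)))"

end

theory Submission
  imports Defs
begin
lemma emeasure_ball_leb: fixes x :: "'a::euclidean_space" assumes "t \<ge> 0"
  shows "emeasure lebesgue (ball x t) = ennreal (unit_ball_vol (DIM('a)) * t ^ DIM('a))"
  using emeasure_ball[OF assms, of x] by simp

lemma ball_leb[measurable]: "ball (x::'a::euclidean_space) r \<in> sets lebesgue"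
  by (intro sets_completionI_sets) simp

lemma dyadic_pick:
  fixes s d :: real
  assumes s: "s > 0" and d: "d \<ge> 0" and N: "s + d < 2^N * s"
  shows "\<exists>k<N. 2^k * s \<le> s + d \<and> s + d < 2^(k+1) * s"
proof -
  let ?S = "{m. m < N \<and> 2^m * s \<le> s + d}"
  have "0 \<in> ?S" using d N s by (auto intro: ccontr)
  have fin: "finite ?S" by auto
  define k where "k = Max ?S"
  have kS: "k \<in> ?S" unfolding k_def using fin \<open>0 \<in> ?S\<close> by (intro Max_in) auto
  have "s + d < 2^(k+1) * s"
  proof (cases "k + 1 < N")
    case True
    show ?thesis
    proof (rule ccontr)
      assume "\<not> ?thesis"
      then have "k + 1 \<in> ?S" using True by auto
      then have "k + 1 \<le> k" unfolding k_def using fin by (intro Max_ge) auto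
      then show False by simp
    qed
  next
    case False
    then have "k + 1 = N" using kS by auto
    then show ?thesis using N by simp
  qed
  then show ?thesis using kS by auto
qed

lemma dyadic_bound:
  fixes x :: "'a::euclidean_space"
  assumes s: "s > 0" and q: "q \<ge> 0"
    and N: "\<forall>y\<in>A. s + norm (x - y) < 2^N * s"
  shows "(\<integral>\<^sup>+y. ennreal (indicator A y * (s + norm (x-y)) powr (-q)) \<partial>lebesgue)
     \<le> ennreal (\<Sum>k<N. (2^k * s) powr (-q) * (unit_ball_vol (DIM('a)) * (2^(k+1) * s)^DIM('a)))"
proof -
  have pw: "ennreal (indicator A y * (s + norm (x-y)) powr (-q))
      \<le> (\<Sum>k<N. ennreal ((2^k * s) powr (-q)) * indicator (ball x (2^(k+1) * s)) y)" for y
  proof (cases "y \<in> A")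
    case False then show ?thesis by simp
  next
    case True
    then have "s + norm (x - y) < 2^N * s" using N by auto
    then obtain k where k: "k < N" "2^k * s \<le> s + norm (x - y)" "s + norm (x - y) < 2^(k+1) * s"
      using dyadic_pick[OF s, of "norm (x-y)"] by auto
    have "(s + norm (x-y)) powr (-q) \<le> (2^k * s) powr (-q)"
      using k(2) s q by (intro powr_mono2') auto
    then have "ennreal (indicator A y * (s + norm (x-y)) powr (-q))
        \<le> ennreal ((2^k * s) powr (-q)) * indicator (ball x (2^(k+1) * s)) y"
      using True k(3) s by (auto simp: dist_norm intro!: ennreal_leI)
    also have "\<dots> \<le> (\<Sum>k<N. ennreal ((2^k * s) powr (-q)) * indicator (ball x (2^(k+1) * s)) y)"
      using k(1) by (intro member_le_sum) auto
    finally show ?thesis .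
  qed
  have "(\<integral>\<^sup>+y. ennreal (indicator A y * (s + norm (x-y)) powr (-q)) \<partial>lebesgue)
      \<le> (\<integral>\<^sup>+y. (\<Sum>k<N. ennreal ((2^k * s) powr (-q)) * indicator (ball x (2^(k+1) * s)) y) \<partial>lebesgue)"
    by (intro nn_integral_mono pw)
  also have "\<dots> = (\<Sum>k<N. \<integral>\<^sup>+y. ennreal ((2^k * s) powr (-q)) * indicator (ball x (2^(k+1) * s)) y \<partial>lebesgue)"
    by (rule nn_integral_sum) measurable
  also have "\<dots> = (\<Sum>k<N. ennreal ((2^k * s) powr (-q)) * emeasure lebesgue (ball x (2^(k+1) * s)))"
    by (intro sum.cong refl nn_integral_cmult_indicator ball_leb)
  also have "\<dots> = (\<Sum>k<N. ennreal ((2^k * s) powr (-q) * (unit_ball_vol (DIM('a)) * (2^(k+1) * s)^DIM('a))))"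
    using s by (intro sum.cong refl, subst emeasure_ball_leb) (auto simp: ennreal_mult[symmetric])
  also have "\<dots> = ennreal (\<Sum>k<N. (2^k * s) powr (-q) * (unit_ball_vol (DIM('a)) * (2^(k+1) * s)^DIM('a)))"
    using s by (intro sum_ennreal) (auto intro!: mult_nonneg_nonneg)
  finally show ?thesis .
qed
lemma term_eq:
  fixes s q w :: real and n k :: nat
  assumes s: "s > 0"
  shows "(2^k * s) powr (-q) * (w * (2^(k+1) * s)^n) = w * 2^n * s powr (real n - q) * (2 powr (real n - q))^k"
proof -
  have f1: "(2^k * s) powr (-q) = 2 powr (- q * k) * s powr (-q)"
    using s by (simp add: powr_mult powr_realpow[symmetric] powr_powr mult.commute)
  have f2: "(2^(k+1) * s)^n = 2 powr (real n * k) * 2^n * s powr n"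
    using s by (simp add: power_mult_distrib powr_realpow[symmetric] powr_powr power_add power_mult[symmetric] mult.commute)
  have f3: "(2 powr (real n - q))^k = 2 powr ((real n - q) * k)"
    by (simp add: powr_power mult.commute)
  have e1: "s powr (real n - q) = s powr (-q) * s powr n" by (simp add: powr_add[symmetric])
  have e2: "2 powr ((real n - q) * k) = 2 powr (- q * k) * 2 powr (real n * k)"
    by (simp add: powr_add[symmetric] algebra_simps)
  show ?thesis unfolding f1 f2 f3 e1 e2 by (simp only: mult_ac)
qed

lemma dyadic_sum_eq:
  fixes s q w :: real and n N :: nat
  assumes s: "s > 0"
  shows "(\<Sum>k<N. (2^k * s) powr (-q) * (w * (2^(k+1) * s)^n)) = w * 2^n * s powr (real n - q) * (\<Sum>k<N. (2 powr (real n - q))^k)"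
  by (simp only: sum_distrib_left term_eq[OF s])

lemma dyadic_sum_T1:
  fixes s q w :: real and n N :: nat
  assumes s: "s > 0" and w: "w \<ge> 0" and q: "q > n"
  shows "(\<Sum>k<N. (2^k * s) powr (-q) * (w * (2^(k+1) * s)^n)) \<le> w * 2^n * s powr (real n - q) / (1 - 2 powr (real n - q))"
proof -
  let ?r = "2 powr (real n - q)"
  have r1: "?r < 1" using q by (simp add: powr_less_one)
  have r0: "?r > 0" by simp
  have "(\<Sum>k<N. ?r^k) = (1 - ?r^N) / (1 - ?r)" using r1 q by (simp add: sum_gp_strict)
  also have "\<dots> \<le> 1 / (1 - ?r)" using r1 r0 by (intro divide_right_mono) auto
  finally have "(\<Sum>k<N. ?r^k) \<le> 1 / (1 - ?r)" .
  then have "w * 2^n * s powr (real n - q) * (\<Sum>k<N. ?r^k) \<le> w * 2^n * s powr (real n - q) * (1 / (1 - ?r))"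
    using w by (intro mult_left_mono) auto
  then show ?thesis unfolding dyadic_sum_eq[OF s] by simp
qed

lemma dyadic_sum_T2:
  fixes s q w M :: real and n N :: nat
  assumes s: "s > 0" and w: "w \<ge> 0" and q: "q < n" and M: "2^N * s \<le> M"
  shows "(\<Sum>k<N. (2^k * s) powr (-q) * (w * (2^(k+1) * s)^n)) \<le> w * 2^n * M powr (real n - q) / (2 powr (real n - q) - 1)"
proof -
  let ?r = "2 powr (real n - q)"
  have r1: "?r > 1" using q by simp
  have "(\<Sum>k<N. ?r^k) = (1 - ?r^N) / (1 - ?r)" using r1 q by (simp add: sum_gp_strict)
  also have "\<dots> = (?r^N - 1) / (?r - 1)" by (metis minus_diff_eq minus_divide_divide)
  also have "\<dots> \<le> ?r^N / (?r - 1)" using r1 by (intro divide_right_mono) auto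
  finally have A: "(\<Sum>k<N. ?r^k) \<le> ?r^N / (?r - 1)" .
  have B: "s powr (real n - q) * ?r^N = (2^N * s) powr (real n - q)"
    using s by (simp add: powr_mult powr_power powr_realpow[symmetric] powr_powr mult.commute)
  have C: "(2^N * s) powr (real n - q) \<le> M powr (real n - q)"
    using s q M by (intro powr_mono2) auto
  have "w * 2^n * s powr (real n - q) * (\<Sum>k<N. ?r^k) \<le> w * 2^n * s powr (real n - q) * (?r^N / (?r - 1))"
    using w A by (intro mult_left_mono) auto
  also have "\<dots> = w * 2^n * (s powr (real n - q) * ?r^N) / (?r - 1)" by simp
  also have "\<dots> \<le> w * 2^n * M powr (real n - q) / (?r - 1)"
    unfolding B using C w r1 by (intro divide_right_mono mult_left_mono) auto
  finally show ?thesis unfolding dyadic_sum_eq[OF s] .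
qed

lemma cball_leb[measurable]: "cball (x::'a::euclidean_space) r \<in> sets lebesgue"
  by (intro sets_completionI_sets) simp

lemma weight_cont:
  fixes w :: "'a::euclidean_space \<Rightarrow> real"
  assumes c: "continuous_on UNIV w" and nn: "\<And>x. 0 \<le> w x"
  shows "weight w"
  unfolding weight_def
proof (intro conjI allI)
  show "w \<in> borel_measurable lebesgue"
    using borel_measurable_continuous_onI[OF c] by (intro measurable_completion) simp
  show "0 \<le> w x" for x by (rule nn)
  fix x :: 'a and r :: real
  obtain a where a: "cball x r \<subseteq> cbox (-a) a"
    using bounded_subset_cbox_symmetric[OF bounded_cball] by metis
  have "w absolutely_integrable_on cbox (-a) a"
    using c by (intro absolutely_integrable_continuous) (auto intro: continuous_on_subset)
  then show "set_integrable lebesgue (cball x r) w"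
    by (rule set_integrable_subset) (use a in auto)
qed

definition vv :: "'a::euclidean_space \<Rightarrow> real" where
  "vv = indicator (ball 0 1)"

lemma vv_measurable[measurable]: "vv \<in> borel_measurable lebesgue"
  unfolding vv_def by measurable

lemma weight_vv: "weight (vv :: 'a::euclidean_space \<Rightarrow> real)"
  unfolding weight_def
proof (intro conjI allI)
  show "vv \<in> borel_measurable lebesgue" by measurable
  show "0 \<le> vv x" for x by (simp add: vv_def)
  fix x :: 'a and r :: real
  have "integrable lebesgue (indicator (cball x r \<inter> ball 0 1) :: 'a \<Rightarrow> real)"
  proof (rule integrable_real_indicator)
    show "cball x r \<inter> ball 0 1 \<in> sets lebesgue" by measurable
    have "emeasure lebesgue (cball x r \<inter> ball 0 1) \<le> emeasure lebesgue (ball (0::'a) 1)"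
      by (intro emeasure_mono) auto
    also have "\<dots> < \<infinity>" using emeasure_lborel_ball_finite[of "0::'a" 1] by simp
    finally show "emeasure lebesgue (cball x r \<inter> ball 0 1) < \<infinity>" .
  qed
  moreover have "(\<lambda>y. indicator (cball x r) y *\<^sub>R vv y) = (indicator (cball x r \<inter> ball 0 1) :: 'a \<Rightarrow> real)"
    by (auto simp: vv_def indicator_def fun_eq_iff)
  ultimately show "set_integrable lebesgue (cball x r) vv"
    unfolding set_integrable_def by simp
qed

lemma vv_not_AE: "\<not> (AE y in lebesgue. (vv :: 'a::euclidean_space \<Rightarrow> real) y = 0)"
proof
  assume "AE y in lebesgue. (vv :: 'a \<Rightarrow> real) y = 0"
  moreover have "{y \<in> space lebesgue. \<not> (vv :: 'a \<Rightarrow> real) y = 0} = ball 0 1"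
    by (auto simp: vv_def indicator_def)
  ultimately have "emeasure lebesgue (ball (0::'a) 1) = 0"
    using AE_iff_measurable[of "ball (0::'a) 1" lebesgue "\<lambda>y. vv y = 0"] by auto
  moreover have "emeasure lebesgue (ball (0::'a) 1) = ennreal (unit_ball_vol (DIM('a)) * 1 ^ DIM('a))"
    by (rule emeasure_ball_leb) simp
  ultimately show False using unit_ball_vol_pos[of "real DIM('a)"] by simp
qed

definition ww :: "nat \<Rightarrow> 'a::euclidean_space \<Rightarrow> real" where
  "ww K y = 1 + norm y ^ K"

lemma weight_ww: "weight (ww K)"
  unfolding ww_def by (intro weight_cont continuous_intros) auto

lemma fmeas_ball: "ball (x::'a::euclidean_space) r \<in> fmeasurable lebesgue"
  using emeasure_lborel_ball_finite[of x r] by (intro fmeasurableI) auto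

lemma ww_lower:
  fixes x :: "'a::euclidean_space" and t :: real
  assumes t: "t > 0"
  shows "measure lebesgue (ball x t) \<le> wmeas (ww K) x t"
    and "(t/2)^K * (measure lebesgue (ball x t) - measure lebesgue (ball (0::'a) (t/2))) \<le> wmeas (ww K) x t"
proof -
  let ?A = "ball x t" and ?B = "ball (0::'a) (t/2)"
  have wi: "set_integrable lebesgue ?A (ww K)"
    using weight_ww[of K] unfolding weight_def
    by (metis ball_subset_cball cball_leb ball_leb set_integrable_subset)
  have ind_int: "integrable lebesgue (\<lambda>y. c * indicator S y :: real)" if "S \<subseteq> ?A" "S \<in> sets lebesgue" for S c
  proof -
    have "emeasure lebesgue S \<le> emeasure lebesgue ?A" using that by (intro emeasure_mono) auto
    also have "\<dots> < \<infinity>" using emeasure_lborel_ball_finite[of x t] by simp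
    finally show ?thesis using that by (intro integrable_mult_right integrable_real_indicator) auto
  qed
  have eq: "(\<lambda>y. indicator ?A y *\<^sub>R (c * indicator S y)) = (\<lambda>y. c * indicator (?A \<inter> S) y :: real)" for S c
    by (auto simp: indicator_def fun_eq_iff)
  have setint: "set_integrable lebesgue ?A (\<lambda>y. c * indicator S y :: real)" if "S \<in> sets lebesgue" for S c
    unfolding set_integrable_def eq using that by (intro ind_int) auto
  have setval: "(LINT y:?A|lebesgue. c * indicator S y :: real) = c * measure lebesgue (?A \<inter> S)"
    if "S \<in> sets lebesgue" for S c
    unfolding set_lebesgue_integral_def eq by simp
  have "(LINT y:?A|lebesgue. 1 * indicator UNIV y :: real) \<le> (LINT y:?A|lebesgue. ww K y)"
    by (intro set_integral_mono setint wi) (auto simp: ww_def)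
  then show "measure lebesgue ?A \<le> wmeas (ww K) x t"
    unfolding wmeas_def using setval[of UNIV 1] by simp
  have cB: "- ?B \<in> sets lebesgue"
    using sets.compl_sets[OF ball_leb[of 0 "t/2"]] by (simp add: Compl_eq_Diff_UNIV)
  have "(LINT y:?A|lebesgue. (t/2)^K * indicator (- ?B) y :: real) \<le> (LINT y:?A|lebesgue. ww K y)"
  proof (intro set_integral_mono setint wi)
    show "- ?B \<in> sets lebesgue" by (rule cB)
    fix y assume "y \<in> ?A"
    show "(t/2)^K * indicator (- ?B) y \<le> ww K y"
    proof (cases "y \<in> ?B")
      case True then show ?thesis by (simp add: ww_def)
    next
      case False
      then have "t/2 \<le> norm y" by simp
      then have "(t/2)^K \<le> norm y ^ K" using t by (intro power_mono) auto
      then show ?thesis using False by (simp add: ww_def)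
    qed
  qed
  moreover have "(LINT y:?A|lebesgue. (t/2)^K * indicator (- ?B) y :: real) = (t/2)^K * measure lebesgue (?A \<inter> - ?B)"
    by (rule setval[OF cB])
  moreover have "measure lebesgue ?A - measure lebesgue ?B \<le> measure lebesgue (?A \<inter> - ?B)"
  proof -
    have "measure lebesgue ?A \<le> measure lebesgue ((?A \<inter> - ?B) \<union> ?B)"
    proof -
      have "(?A \<inter> - ?B) \<union> ?B = ?A \<union> ?B" by auto
      then show ?thesis by (intro measure_mono_fmeasurable) (auto intro: fmeasurable.Un)
    qed
    also have "\<dots> \<le> measure lebesgue (?A \<inter> - ?B) + measure lebesgue ?B"
    proof -
      have f1: "?A \<inter> - ?B \<in> fmeasurable lebesgue"
        using fmeasurable_Diff[OF lmeasurable_ball[of x t] ball_leb[of 0 "t/2"]] by (simp add: Diff_eq)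
      show ?thesis
        using fmeasurableD2[OF f1] fmeasurableD2[OF lmeasurable_ball[of "0::'a" "t/2"]]
        by (intro measure_subadditive[OF fmeasurableD[OF f1] ball_leb]) (simp_all add: infinity_ennreal_def)
    qed
    finally show ?thesis by simp
  qed
  ultimately show "(t/2)^K * (measure lebesgue ?A - measure lebesgue ?B) \<le> wmeas (ww K) x t"
    unfolding wmeas_def using t
    by (smt (verit, best) mult_left_mono zero_le_divide_iff zero_le_power)
qed

lemma meas_kernel: "(\<lambda>y. ennreal (indicator (ball 0 1) y * (s + norm ((x::'a::euclidean_space)-y)) powr c)) \<in> borel_measurable lebesgue"
proof -
  have [measurable]: "ball (0::'a) 1 \<in> sets borel" by simp
  have [measurable]: "(\<lambda>y. (s + norm ((x::'a::euclidean_space)-y)) powr c) \<in> borel_measurable borel"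
    by (intro powr_real_measurable) (auto intro!: borel_measurable_continuous_onI continuous_intros)
  have "(\<lambda>y. ennreal (indicator (ball 0 1) y * (s + norm ((x::'a::euclidean_space)-y)) powr c)) \<in> borel_measurable borel"
    by measurable
  then show ?thesis by (intro measurable_completion) simp
qed

definition KI :: "'a::euclidean_space \<Rightarrow> real \<Rightarrow> real \<Rightarrow> ennreal" where
  "KI x s q = (\<integral>\<^sup>+ y. ennreal (indicator (ball 0 1) y * (s + norm (x-y)) powr (-q)) \<partial>lebesgue)"

lemma KI_crude:
  fixes x :: "'a::euclidean_space"
  assumes s: "s > 0" and q: "q \<ge> 0"
  shows "KI x s q \<le> ennreal (unit_ball_vol (DIM('a)) * s powr (-q))"
proof -
  have "KI x s q \<le> (\<integral>\<^sup>+ y. ennreal (s powr (-q)) * indicator (ball (0::'a) 1) y \<partial>lebesgue)"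
    unfolding KI_def
  proof (intro nn_integral_mono)
    fix y :: 'a
    have "(s + norm (x-y)) powr (-q) \<le> s powr (-q)" using s q by (intro powr_mono2') auto
    then show "ennreal (indicator (ball 0 1) y * (s + norm (x-y)) powr (-q)) \<le> ennreal (s powr (-q)) * indicator (ball (0::'a) 1) y"
      by (auto simp: indicator_def intro: ennreal_leI)
  qed
  also have "\<dots> = ennreal (s powr (-q)) * emeasure lebesgue (ball (0::'a) 1)"
    by (intro nn_integral_cmult_indicator ball_leb)
  also have "\<dots> = ennreal (unit_ball_vol (DIM('a)) * s powr (-q))"
    by (subst emeasure_ball_leb) (auto simp: ennreal_mult[symmetric] mult.commute)
  finally show ?thesis .
qed

lemma KI_gt:
  fixes x :: "'a::euclidean_space" and q s :: real
  assumes s: "s > 0" and q: "q > DIM('a)"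
  shows "KI x s q \<le> ennreal (unit_ball_vol (DIM('a)) * 2^DIM('a) * s powr (real DIM('a) - q) / (1 - 2 powr (real DIM('a) - q)))"
proof -
  obtain N where N: "(s + norm x + 1) / s < 2^N"
    using real_arch_pow[of 2 "(s + norm x + 1) / s"] by auto
  have N': "\<forall>y\<in>ball (0::'a) 1. s + norm (x - y) < 2^N * s"
  proof
    fix y :: 'a assume "y \<in> ball 0 1"
    then have "norm y < 1" by simp
    moreover have "norm (x - y) \<le> norm x + norm y" by (rule norm_triangle_ineq4)
    moreover have "s + norm x + 1 < 2^N * s" using N s by (simp add: divide_less_eq)
    ultimately show "s + norm (x - y) < 2^N * s" by simp
  qed
  have "KI x s q \<le> ennreal (\<Sum>k<N. (2^k * s) powr (-q) * (unit_ball_vol (DIM('a)) * (2^(k+1) * s)^DIM('a)))"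
    unfolding KI_def using s q N' by (intro dyadic_bound) auto
  also have "\<dots> \<le> ennreal (unit_ball_vol (DIM('a)) * 2^DIM('a) * s powr (real DIM('a) - q) / (1 - 2 powr (real DIM('a) - q)))"
    using s q by (intro ennreal_leI dyadic_sum_T1) auto
  finally show ?thesis .
qed

lemma exists_N_scale:
  fixes s :: real
  assumes s: "0 < s" "s \<le> 1"
  shows "\<exists>N::nat. 4 \<le> 2^N * s \<and> 2^N * s \<le> 8"
proof -
  define N where "N = nat (ceiling (log 2 (4/s)))"
  have l0: "log 2 (4/s) \<ge> 0" using s by simp
  have "real N = of_int (ceiling (log 2 (4/s)))" unfolding N_def using l0 by simp
  then have N1: "log 2 (4/s) \<le> real N" "real N < log 2 (4/s) + 1"
    by linarith+
  have "2 powr (log 2 (4/s)) \<le> 2 powr (real N)" using N1 by simp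
  then have "4/s \<le> 2^N" using s by (simp add: powr_realpow)
  moreover have "2 powr (real N) \<le> 2 powr (log 2 (4/s) + 1)" using N1 by simp
  then have "2^N \<le> 8/s" using s by (simp add: powr_realpow powr_add)
  ultimately show ?thesis using s by (intro exI[of _ N]) (auto simp: field_simps)
qed

lemma KI_le:
  fixes x :: "'a::euclidean_space" and q s ee :: real
  assumes s: "0 < s" "s \<le> 1" and e: "0 \<le> ee" "ee \<le> q" "q - ee < DIM('a)"
  shows "KI x s q \<le> ennreal (max (unit_ball_vol (DIM('a)))
     (unit_ball_vol (DIM('a)) * 2^DIM('a) * 8 powr (real DIM('a) - (q - ee))
       / (2 powr (real DIM('a) - (q - ee)) - 1)) * s powr (-ee))"
  (is "_ \<le> ennreal (?C * _)")
proof -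
  let ?w = "unit_ball_vol (DIM('a))"
  have w0: "?w > 0" by simp
  have C0: "0 \<le> ?C" using w0 by (meson le_max_iff_disj less_imp_le)
  have "s powr ee \<le> 1" using powr_mono2[of ee s 1] s e by simp
  moreover have "s powr ee > 0" using s by simp
  ultimately have se: "1 \<le> s powr (-ee)" by (simp add: powr_minus_divide)
  show ?thesis
  proof (cases "norm x > 2")
    case True
    have "KI x s q \<le> (\<integral>\<^sup>+ y. ennreal 1 * indicator (ball (0::'a) 1) y \<partial>lebesgue)"
      unfolding KI_def
    proof (intro nn_integral_mono)
      fix y :: 'a
      show "ennreal (indicator (ball 0 1) y * (s + norm (x-y)) powr (-q)) \<le> ennreal 1 * indicator (ball (0::'a) 1) y"
      proof (cases "y \<in> ball 0 1")
        case True
        then have "norm y < 1" by simp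
        moreover have "norm x \<le> norm (x - y) + norm y" using norm_triangle_ineq[of "x-y" y] by simp
        ultimately have "1 \<le> s + norm (x - y)" using \<open>norm x > 2\<close> s by simp
        then have "(s + norm (x-y)) powr (-q) \<le> 1" using e
          by (simp add: powr_minus_divide ge_one_powr_ge_zero)
        then show ?thesis using True by (auto intro: ennreal_leI)
      qed simp
    qed
    also have "\<dots> = ennreal ?w"
      using emeasure_ball_leb[of 1 "0::'a"] by (subst nn_integral_cmult_indicator[OF ball_leb]) simp
    also have "\<dots> \<le> ennreal (?C * s powr (-ee))"
    proof (intro ennreal_leI)
      have "?w \<le> ?C" by simp
      also have "?C \<le> ?C * s powr (-ee)" using mult_left_mono[OF se C0] by (simp only: mult_1_right)
      finally show "?w \<le> ?C * s powr (-ee)" .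
    qed
    finally show ?thesis .
  next
    case False
    obtain N :: nat where N: "4 \<le> 2^N * s" "2^N * s \<le> 8" using exists_N_scale[OF s] by auto
    have N': "\<forall>y\<in>ball (0::'a) 1. s + norm (x - y) < 2^N * s"
    proof
      fix y :: 'a assume "y \<in> ball 0 1"
      then have "norm y < 1" by simp
      moreover have "norm (x - y) \<le> norm x + norm y" by (rule norm_triangle_ineq4)
      ultimately show "s + norm (x - y) < 2^N * s" using N s False by simp
    qed
    have "KI x s q \<le> (\<integral>\<^sup>+ y. ennreal (s powr (-ee)) * ennreal (indicator (ball 0 1) y * (s + norm (x-y)) powr (-(q-ee))) \<partial>lebesgue)"
      unfolding KI_def
    proof (intro nn_integral_mono)
      fix y :: 'a
      have "(s + norm (x-y)) powr (-q) = (s + norm (x-y)) powr (-ee) * (s + norm (x-y)) powr (-(q-ee))"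
        by (simp add: powr_add[symmetric])
      also have "\<dots> \<le> s powr (-ee) * (s + norm (x-y)) powr (-(q-ee))"
        using s e by (intro mult_right_mono powr_mono2') auto
      finally have "indicator (ball 0 1) y * (s + norm (x-y)) powr (-q) \<le> s powr (-ee) * (indicator (ball 0 1) y * (s + norm (x-y)) powr (-(q-ee)))"
        by (auto simp: indicator_def)
      then show "ennreal (indicator (ball 0 1) y * (s + norm (x-y)) powr (-q)) \<le> ennreal (s powr (-ee)) * ennreal (indicator (ball 0 1) y * (s + norm (x-y)) powr (-(q-ee)))"
        by (simp add: ennreal_mult[symmetric] ennreal_leI)
    qed
    also have "\<dots> = ennreal (s powr (-ee)) * (\<integral>\<^sup>+ y. ennreal (indicator (ball 0 1) y * (s + norm (x-y)) powr (-(q-ee))) \<partial>lebesgue)"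
      by (rule nn_integral_cmult[OF meas_kernel])
    also have "\<dots> \<le> ennreal (s powr (-ee)) * ennreal (\<Sum>k<N. (2^k * s) powr (-(q-ee)) * (?w * (2^(k+1) * s)^DIM('a)))"
      using s e N' by (intro mult_left_mono dyadic_bound) auto
    also have "\<dots> \<le> ennreal (s powr (-ee)) * ennreal (?w * 2^DIM('a) * 8 powr (real DIM('a) - (q - ee))
       / (2 powr (real DIM('a) - (q - ee)) - 1))"
      using s e N by (intro mult_left_mono ennreal_leI dyadic_sum_T2) auto
    also have "\<dots> \<le> ennreal (s powr (-ee)) * ennreal ?C"
      by (intro mult_left_mono ennreal_leI) auto
    also have "\<dots> = ennreal (?C * s powr (-ee))"
      using C0 by (simp add: ennreal_mult[symmetric] mult.commute)
    finally show ?thesis .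
  qed
qed

lemma KI_small:
  fixes q D :: real
  assumes q: "q > 0" and D: "D \<ge> 0" and c1: "q > DIM('a) \<Longrightarrow> q - DIM('a) \<le> D"
    and c2: "q = DIM('a) \<Longrightarrow> D > 0"
  shows "\<exists>C\<ge>0. \<forall>(x::'a::euclidean_space) s. 0 < s \<and> s \<le> 1 \<longrightarrow> KI x s q \<le> ennreal (C * s powr (-D))"
proof -
  let ?n = "real DIM('a)"
  let ?w = "unit_ball_vol (DIM('a))"
  have w0: "?w > 0" by simp
  consider "q > ?n" | "q < ?n" | "q = ?n" by linarith
  then show ?thesis
  proof cases
    case 1
    define C where "C = ?w * 2^DIM('a) / (1 - 2 powr (?n - q))"
    have r1: "2 powr (?n - q) < 1" using 1 by (simp add: powr_less_one)
    have C0: "C \<ge> 0" unfolding C_def using w0 r1 by simp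
    show ?thesis
    proof (intro exI[of _ C] conjI C0 allI impI)
      fix x :: 'a and s :: real assume s: "0 < s \<and> s \<le> 1"
      have "KI x s q \<le> ennreal (?w * 2^DIM('a) * s powr (?n - q) / (1 - 2 powr (?n - q)))"
        using s 1 by (intro KI_gt) auto
      also have "?w * 2^DIM('a) * s powr (?n - q) / (1 - 2 powr (?n - q)) = C * s powr (?n - q)"
        unfolding C_def by simp
      also have "C * s powr (?n - q) \<le> C * s powr (-D)"
        using s c1[OF 1] C0 by (intro mult_left_mono powr_mono') auto
      finally show "KI x s q \<le> ennreal (C * s powr (-D))" by (simp add: ennreal_leI)
    qed
  next
    case 2
    define C where "C = max ?w (?w * 2^DIM('a) * 8 powr (?n - (q - 0)) / (2 powr (?n - (q - 0)) - 1))"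
    have C0: "C \<ge> 0" unfolding C_def using w0 by (meson le_max_iff_disj less_imp_le)
    show ?thesis
    proof (intro exI[of _ C] conjI C0 allI impI)
      fix x :: 'a and s :: real assume s: "0 < s \<and> s \<le> 1"
      have "KI x s q \<le> ennreal (C * s powr (-0))"
        unfolding C_def using s 2 q by (intro KI_le) auto
      also have "C * s powr (-0) \<le> C * s powr (-D)"
        using s D C0 by (intro mult_left_mono powr_mono') auto
      finally show "KI x s q \<le> ennreal (C * s powr (-D))" by (simp add: ennreal_leI)
    qed
  next
    case 3
    define ee where "ee = min D q / 2"
    have D0: "D > 0" using c2 3 by simp
    have ee: "0 \<le> ee" "ee \<le> q" "q - ee < ?n" "ee \<le> D" unfolding ee_def using D0 q 3 by auto
    define C where "C = max ?w (?w * 2^DIM('a) * 8 powr (?n - (q - ee)) / (2 powr (?n - (q - ee)) - 1))"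
    have C0: "C \<ge> 0" unfolding C_def using w0 by (meson le_max_iff_disj less_imp_le)
    show ?thesis
    proof (intro exI[of _ C] conjI C0 allI impI)
      fix x :: 'a and s :: real assume s: "0 < s \<and> s \<le> 1"
      have "KI x s q \<le> ennreal (C * s powr (-ee))"
        unfolding C_def using s ee by (intro KI_le) auto
      also have "C * s powr (-ee) \<le> C * s powr (-D)"
        using s ee C0 by (intro mult_left_mono powr_mono') auto
      finally show "KI x s q \<le> ennreal (C * s powr (-D))" by (simp add: ennreal_leI)
    qed
  qed
qed

lemma ww_ratio:
  fixes x :: "'a::euclidean_space"
  assumes t: "t > 0"
  shows "1 \<le> wmeas (ww K) x t / bvol x t" "(t/2)^K / 2 \<le> wmeas (ww K) x t / bvol x t"
proof -
  let ?n = "DIM('a)"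
  let ?w = "unit_ball_vol (DIM('a))"
  have w0: "?w > 0" by simp
  have bv: "bvol x t = ?w * t^?n" unfolding bvol_def using content_ball[of t x] t by simp
  have bpos: "bvol x t > 0" unfolding bv using w0 t by simp
  have b2: "bvol (0::'a) (t/2) = ?w * t^?n / 2^?n"
    unfolding bvol_def using content_ball[of "t/2" "0::'a"] t by (simp add: power_divide)
  show "1 \<le> wmeas (ww K) x t / bvol x t"
    using ww_lower(1)[OF t, where x=x and K=K] bpos unfolding bvol_def by simp
  have "(t/2)^K / 2 * bvol x t \<le> (t/2)^K * (bvol x t - bvol x t / 2^?n)"
  proof -
    have "(2::real)^?n \<ge> 2" using power_increasing[of 1 ?n "2::real"] DIM_positive[where 'a='a] by simp
    then have "bvol x t / 2^?n \<le> bvol x t / 2" using bpos by (intro divide_left_mono) auto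
    then have "bvol x t / 2 \<le> bvol x t - bvol x t / 2^?n" by simp
    then show ?thesis using t by (simp add: mult_left_mono)
  qed
  also have "\<dots> \<le> wmeas (ww K) x t"
    using ww_lower(2)[OF t, where x=x and K=K] unfolding bvol_def[symmetric] by (simp add: bv b2)
  finally show "(t/2)^K / 2 \<le> wmeas (ww K) x t / bvol x t"
    using bpos by (simp add: le_divide_eq)
qed

lemma final_step:
  fixes L :: "'a::euclidean_space \<Rightarrow> real \<Rightarrow> real" and e C0 C1 :: real
  assumes C0: "C0 \<ge> 0" and C1: "C1 \<ge> 0"
   and small: "\<And>x t. t > 0 \<Longrightarrow> unit_ball_vol (DIM('a)) powr (1/DIM('a)) * t \<le> 1 \<Longrightarrow> L x t \<le> C0"
   and big: "\<And>x t. t > 0 \<Longrightarrow> L x t \<le> C1 * (unit_ball_vol (DIM('a)) powr (1/DIM('a)) * t) powr e"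
  shows "\<exists>C. \<forall>x t. t > 0 \<longrightarrow> L x t \<le> C * wmeas (ww (nat \<lceil>max 0 e\<rceil>)) x t / bvol x t"
proof -
  define K where "K = nat \<lceil>max 0 e\<rceil>"
  define c where "c = unit_ball_vol (DIM('a)) powr (1/DIM('a))"
  have "unit_ball_vol (real DIM('a)) \<noteq> 0" using unit_ball_vol_pos[of "real DIM('a)"] by linarith
  then have c0: "c > 0" unfolding c_def by simp
  define C where "C = C0 + C1 * c^K * 2^(K+1)"
  have eK: "e \<le> real K" unfolding K_def by linarith
  show ?thesis
  proof (intro exI[of _ C] allI impI)
    fix x :: 'a and t :: real assume t: "t > 0"
    define R where "R = wmeas (ww K) x t / bvol x t"
    have R1: "1 \<le> R" and R2: "(t/2)^K / 2 \<le> R" unfolding R_def using ww_ratio[OF t] by auto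
    have "L x t \<le> C * R"
    proof (cases "c * t \<le> 1")
      case True
      then have "L x t \<le> C0" using small[OF t] unfolding c_def by auto
      also have "C0 \<le> C0 * R" using C0 R1 mult_left_mono[OF R1 C0] by simp
      also have "C0 * R \<le> C * R" unfolding C_def using R1 C1 c0 by (intro mult_right_mono) auto
      finally show ?thesis .
    next
      case False
      then have s1: "1 < c * t" by simp
      have "L x t \<le> C1 * (c * t) powr e" using big[OF t] unfolding c_def by simp
      also have "\<dots> \<le> C1 * (c * t) powr (real K)"
        using s1 eK C1 by (intro mult_left_mono powr_mono) auto
      also have "(c * t) powr (real K) = c^K * 2^K * (t/2)^K"
        using s1 c0 t by (simp add: powr_realpow power_mult_distrib power_divide)
      also have "C1 * (c^K * 2^K * (t/2)^K) = (C1 * c^K * 2^(K+1)) * ((t/2)^K / 2)" by simp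
      also have "\<dots> \<le> (C1 * c^K * 2^(K+1)) * R"
        using R2 C1 c0 by (intro mult_left_mono) auto
      also have "\<dots> \<le> C * R" unfolding C_def using R1 C0 by (intro mult_right_mono) auto
      finally show ?thesis .
    qed
    then show "L x t \<le> C * wmeas (ww (nat \<lceil>max 0 e\<rceil>)) x t / bvol x t"
      unfolding R_def K_def by simp
  qed
qed

lemma real_of_ereal_leI: "S \<le> ereal c \<Longrightarrow> 0 \<le> c \<Longrightarrow> real_of_ereal S \<le> c"
  by (cases S) auto

lemma meas_ratio: "(\<lambda>y. ereal (vv y / (s + norm ((x::'a::euclidean_space)-y)) powr c)) \<in> borel_measurable lebesgue"
proof -
  have [measurable]: "ball (0::'a) 1 \<in> sets borel" by simp
  have [measurable]: "(\<lambda>y. (s + norm ((x::'a::euclidean_space)-y)) powr c) \<in> borel_measurable borel"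
    by (intro powr_real_measurable) (auto intro!: borel_measurable_continuous_onI continuous_intros)
  have "(\<lambda>y. ereal (vv y / (s + norm ((x::'a::euclidean_space)-y)) powr c)) \<in> borel_measurable borel"
    unfolding vv_def by measurable
  then show ?thesis by (intro measurable_completion) simp
qed

lemma bvol_eq: "t > 0 \<Longrightarrow> bvol (x::'a::euclidean_space) t = unit_ball_vol (DIM('a)) * t ^ DIM('a)"
  unfolding bvol_def using content_ball[of t x] by simp

lemma bvol_powr:
  assumes t: "t > 0"
  shows "bvol (x::'a::euclidean_space) t powr (c / real DIM('a)) = (unit_ball_vol (DIM('a)) powr (1 / real DIM('a)) * t) powr c"
proof -
  let ?w = "unit_ball_vol (DIM('a))" and ?n = "real DIM('a)"
  have w0: "?w > 0" by simp
  have "bvol x t powr (1 / ?n) = ?w powr (1 / ?n) * t"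
  proof -
    have "bvol x t powr (1 / ?n) = ?w powr (1 / ?n) * (t powr ?n) powr (1 / ?n)"
      using t w0 by (simp add: bvol_eq powr_mult powr_realpow)
    also have "(t powr ?n) powr (1 / ?n) = t" using t by (simp add: powr_powr)
    finally show ?thesis .
  qed
  moreover have "bvol x t powr (c / ?n) = (bvol x t powr (1 / ?n)) powr c"
    by (simp add: powr_powr)
  ultimately show ?thesis by simp
qed

lemma c_pos: "unit_ball_vol (real DIM('a::euclidean_space)) powr (1 / real DIM('a)) > 0"
proof -
  have "unit_ball_vol (real DIM('a)) \<noteq> 0" using unit_ball_vol_pos[of "real DIM('a)"] by linarith
  then show ?thesis by simp
qed

lemma case_r1:
  fixes \<delta> dt \<beta> :: real
  assumes b0: "\<beta> > 0" and e: "\<delta> - dt - \<beta> \<ge> 0"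
  shows "\<exists>C. \<forall>(x::'a::euclidean_space) t. t > 0 \<longrightarrow>
    (let S = esssup lebesgue (\<lambda>y. ereal (vv y / (bvol x t powr (1 / real DIM('a)) + norm (x - y)) powr \<beta>))
     in S < \<infinity> \<and> bvol x t powr ((\<delta> - dt) / real DIM('a)) * real_of_ereal S
        \<le> C * wmeas (ww (nat \<lceil>max 0 (\<delta> - dt - \<beta>)\<rceil>)) x t / bvol x t)"
proof -
  let ?w = "unit_ball_vol (DIM('a))" and ?n = "real DIM('a)"
  define S where "S = (\<lambda>(x::'a) t. esssup lebesgue (\<lambda>y. ereal (vv y / (bvol x t powr (1 / ?n) + norm (x - y)) powr \<beta>)))"
  define L where "L = (\<lambda>(x::'a) t. bvol x t powr ((\<delta> - dt) / ?n) * real_of_ereal (S x t))"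
  have Sb: "S x t \<le> ereal ((?w powr (1 / ?n) * t) powr (-\<beta>))" if t: "t > 0" for x t
  proof -
    let ?s = "?w powr (1 / ?n) * t"
    have s0: "?s > 0" using t c_pos[where 'a='a] by simp
    have "bvol x t powr (1 / ?n) = ?s" using bvol_powr[OF t, of x 1] s0 by simp
    then have "S x t = esssup lebesgue (\<lambda>y. ereal (vv y / (?s + norm (x - y)) powr \<beta>))"
      unfolding S_def by simp
    also have "\<dots> \<le> ereal (?s powr (-\<beta>))"
    proof (rule esssup_I)
      show "(\<lambda>y. ereal (vv y / (?s + norm (x - y)) powr \<beta>)) \<in> borel_measurable lebesgue"
        by (rule meas_ratio)
      show "AE y in lebesgue. ereal (vv y / (?s + norm (x - y)) powr \<beta>) \<le> ereal (?s powr (-\<beta>))"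
      proof (intro AE_I2)
        fix y
        have "?s powr \<beta> \<le> (?s + norm (x - y)) powr \<beta>" using s0 b0 by (intro powr_mono2) auto
        moreover have z1: "?s + norm (x - y) > 0" using s0 norm_ge_zero[of "x - y"] by linarith
        have "(?s + norm (x - y)) powr \<beta> > 0" by (subst powr_gt_zero) (use z1 in linarith)
        moreover have "?s powr \<beta> > 0" by (subst powr_gt_zero) (use s0 in linarith)
        ultimately have "1 / (?s + norm (x - y)) powr \<beta> \<le> 1 / ?s powr \<beta>"
          by (intro divide_left_mono mult_pos_pos) auto
        then show "ereal (vv y / (?s + norm (x - y)) powr \<beta>) \<le> ereal (?s powr (-\<beta>))"
          by (auto simp: vv_def indicator_def powr_minus_divide)
      qed
    qed
    finally show ?thesis .
  qed
  have big: "L x t \<le> 1 * (?w powr (1 / ?n) * t) powr (\<delta> - dt - \<beta>)" if t: "t > 0" for x t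
  proof -
    let ?s = "?w powr (1 / ?n) * t"
    have s0: "?s > 0" using t c_pos[where 'a='a] by simp
    have "L x t = ?s powr (\<delta> - dt) * real_of_ereal (S x t)"
      unfolding L_def using bvol_powr[OF t, of x "\<delta> - dt"] by simp
    also have "\<dots> \<le> ?s powr (\<delta> - dt) * ?s powr (-\<beta>)"
      using Sb[OF t, of x] by (intro mult_left_mono real_of_ereal_leI) auto
    also have "\<dots> = ?s powr (\<delta> - dt - \<beta>)" by (simp add: powr_add[symmetric])
    finally show ?thesis by simp
  qed
  have small: "L x t \<le> 1" if t: "t > 0" and s1: "?w powr (1 / ?n) * t \<le> 1" for x t
  proof -
    have "L x t \<le> 1 * (?w powr (1 / ?n) * t) powr (\<delta> - dt - \<beta>)" by (rule big[OF t])
    also have "\<dots> \<le> 1" using s1 e t by (simp add: powr_le1)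
    finally show ?thesis .
  qed
  have "\<exists>C. \<forall>x t. t > 0 \<longrightarrow> L x t \<le> C * wmeas (ww (nat \<lceil>max 0 (\<delta> - dt - \<beta>)\<rceil>)) x t / bvol x t"
    by (rule final_step[OF zero_le_one zero_le_one small big])
  then obtain C where C: "\<forall>x t. t > 0 \<longrightarrow> L x t \<le> C * wmeas (ww (nat \<lceil>max 0 (\<delta> - dt - \<beta>)\<rceil>)) x t / bvol x t"
    by (rule exE)
  show ?thesis
  proof (intro exI[of _ C] allI impI)
    fix x :: 'a and t :: real assume t: "t > 0"
    have Sfin: "S x t < \<infinity>" by (rule order.strict_trans1[OF Sb[OF t, of x]]) simp
    have Lb: "L x t \<le> C * wmeas (ww (nat \<lceil>max 0 (\<delta> - dt - \<beta>)\<rceil>)) x t / bvol x t"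
      using C t by simp
    show "let S = esssup lebesgue (\<lambda>y. ereal (vv y / (bvol x t powr (1 / real DIM('a)) + norm (x - y)) powr \<beta>))
     in S < \<infinity> \<and> bvol x t powr ((\<delta> - dt) / real DIM('a)) * real_of_ereal S
        \<le> C * wmeas (ww (nat \<lceil>max 0 (\<delta> - dt - \<beta>)\<rceil>)) x t / bvol x t"
      unfolding Let_def
    proof (intro conjI)
      show "esssup lebesgue (\<lambda>y. ereal (vv y / (bvol x t powr (1 / real DIM('a)) + norm (x - y)) powr \<beta>)) < \<infinity>"
        using Sfin unfolding S_def by simp
      show "bvol x t powr ((\<delta> - dt) / real DIM('a)) * real_of_ereal (esssup lebesgue (\<lambda>y. ereal (vv y / (bvol x t powr (1 / real DIM('a)) + norm (x - y)) powr \<beta>)))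
        \<le> C * wmeas (ww (nat \<lceil>max 0 (\<delta> - dt - \<beta>)\<rceil>)) x t / bvol x t"
        using Lb unfolding L_def S_def by simp
    qed
  qed
qed

lemma powr_aux:
  fixes A s b p :: real
  assumes A: "A \<ge> 0" and s: "s > 0" and p: "p > 0"
  shows "(A * s powr b) powr (1/p) = A powr (1/p) * s powr (b/p)"
  using A s p by (simp add: powr_mult powr_powr)

lemma powr_cancel: "(z::real) > 0 \<Longrightarrow> z powr a * z powr (-a) = 1"
  by (simp add: powr_add[symmetric])

lemma case_rp:
  fixes \<delta> dt \<beta> p :: real
  assumes p0: "p > 0" and b0: "\<beta> > 0" and d: "dt \<le> \<delta>"
    and c1: "p * \<beta> > DIM('a) \<Longrightarrow> p * \<beta> - DIM('a) \<le> p * (\<delta> - dt)"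
    and c2: "p * \<beta> = DIM('a) \<Longrightarrow> p * (\<delta> - dt) > 0"
  shows "\<exists>C. \<forall>(x::'a::euclidean_space) t. t > 0 \<longrightarrow>
    (let I = (\<integral>\<^sup>+ y. ennreal (vv y powr p / (bvol x t powr (1 / real DIM('a)) + norm (x - y)) powr (p * \<beta>)) \<partial>lebesgue)
     in I < \<infinity> \<and> bvol x t powr ((\<delta> - dt) / real DIM('a)) * enn2real I powr (1 / p)
        \<le> C * wmeas (ww (nat \<lceil>max 0 (\<delta> - dt - \<beta>)\<rceil>)) x t / bvol x t)"
proof -
  let ?w = "unit_ball_vol (DIM('a))" and ?n = "real DIM('a)"
  have w0: "?w > 0" by simp
  define q where "q = p * \<beta>"
  define D where "D = p * (\<delta> - dt)"
  have q0: "q > 0" unfolding q_def using p0 b0 by simp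
  have D0: "D \<ge> 0" unfolding D_def using p0 d by simp
  have "\<exists>C\<ge>0. \<forall>(x::'a) s. 0 < s \<and> s \<le> 1 \<longrightarrow> KI x s q \<le> ennreal (C * s powr (-D))"
    by (rule KI_small[OF q0 D0]) (use c1 c2 in \<open>auto simp: q_def D_def\<close>)
  then obtain C0 where C0: "C0 \<ge> 0" and C0b: "\<forall>(x::'a) s. 0 < s \<and> s \<le> 1 \<longrightarrow> KI x s q \<le> ennreal (C0 * s powr (-D))"
    by (elim exE conjE)
  define I where "I = (\<lambda>(x::'a) t. (\<integral>\<^sup>+ y. ennreal (vv y powr p / (bvol x t powr (1 / ?n) + norm (x - y)) powr (p * \<beta>)) \<partial>lebesgue))"
  define L where "L = (\<lambda>(x::'a) t. bvol x t powr ((\<delta> - dt) / ?n) * enn2real (I x t) powr (1 / p))"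
  have IKI: "I x t = KI x (?w powr (1 / ?n) * t) q" if t: "t > 0" for x t
  proof -
    let ?s = "?w powr (1 / ?n) * t"
    have s0: "?s > 0" using t c_pos[where 'a='a] by simp
    have "bvol x t powr (1 / ?n) = ?s" using bvol_powr[OF t, of x 1] s0 by simp
    then have "I x t = (\<integral>\<^sup>+ y. ennreal (vv y powr p / (?s + norm (x - y)) powr q) \<partial>lebesgue)"
      unfolding I_def q_def by simp
    also have "\<dots> = KI x ?s q"
      unfolding KI_def
    proof (intro nn_integral_cong)
      fix y :: 'a
      show "ennreal (vv y powr p / (?s + norm (x - y)) powr q) = ennreal (indicator (ball 0 1) y * (?s + norm (x - y)) powr (-q))"
        using p0 by (simp add: vv_def indicator_def powr_minus_divide)
    qed
    finally show ?thesis .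
  qed
  have Ifin: "I x t < \<infinity>" and Icrude: "enn2real (I x t) \<le> ?w * (?w powr (1 / ?n) * t) powr (-q)"
    if t: "t > 0" for x t
  proof -
    let ?s = "?w powr (1 / ?n) * t"
    have s0: "?s > 0" using t c_pos[where 'a='a] by simp
    have b: "I x t \<le> ennreal (?w * ?s powr (-q))" unfolding IKI[OF t] using s0 q0 by (intro KI_crude) auto
    show "I x t < \<infinity>" by (rule order.strict_trans1[OF b]) simp
    show "enn2real (I x t) \<le> ?w * ?s powr (-q)" using b w0 by (intro enn2real_leI) auto
  qed
  have big: "L x t \<le> ?w powr (1/p) * (?w powr (1 / ?n) * t) powr (\<delta> - dt - \<beta>)" if t: "t > 0" for x t
  proof -
    let ?s = "?w powr (1 / ?n) * t"
    have s0: "?s > 0" using t c_pos[where 'a='a] by simp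
    have "L x t = ?s powr (\<delta> - dt) * enn2real (I x t) powr (1 / p)"
      unfolding L_def using bvol_powr[OF t, of x "\<delta> - dt"] by simp
    also have "\<dots> \<le> ?s powr (\<delta> - dt) * (?w * ?s powr (-q)) powr (1 / p)"
      using Icrude[OF t, of x] p0 by (intro mult_left_mono powr_mono2) auto
    also have "(?w * ?s powr (-q)) powr (1 / p) = ?w powr (1/p) * ?s powr (-q / p)"
      using w0 s0 p0 by (intro powr_aux) auto
    also have "-q / p = -\<beta>" unfolding q_def using p0 by simp
    also have "?s powr (\<delta> - dt) * (?w powr (1/p) * ?s powr (-\<beta>)) = ?w powr (1/p) * ?s powr (\<delta> - dt - \<beta>)"
      by (simp add: powr_add[symmetric])
    finally show ?thesis .
  qed
  have small: "L x t \<le> C0 powr (1/p)" if t: "t > 0" and s1: "?w powr (1 / ?n) * t \<le> 1" for x t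
  proof -
    let ?s = "?w powr (1 / ?n) * t"
    have s0: "?s > 0" using t c_pos[where 'a='a] by simp
    have "I x t \<le> ennreal (C0 * ?s powr (-D))" unfolding IKI[OF t] by (rule C0b[rule_format]) (use s0 s1 in simp)
    then have e1: "enn2real (I x t) \<le> C0 * ?s powr (-D)" using C0 by (intro enn2real_leI) auto
    have "L x t = ?s powr (\<delta> - dt) * enn2real (I x t) powr (1 / p)"
      unfolding L_def using bvol_powr[OF t, of x "\<delta> - dt"] by simp
    also have "\<dots> \<le> ?s powr (\<delta> - dt) * (C0 * ?s powr (-D)) powr (1 / p)"
      using e1 p0 by (intro mult_left_mono powr_mono2) auto
    also have "(C0 * ?s powr (-D)) powr (1 / p) = C0 powr (1/p) * ?s powr (-D / p)"
      using C0 s0 p0 by (intro powr_aux) auto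
    also have "-D / p = -(\<delta> - dt)" unfolding D_def using p0 by simp
    also have "?s powr (\<delta> - dt) * (C0 powr (1/p) * ?s powr (-(\<delta> - dt))) = C0 powr (1/p)"
    proof -
      have h: "?s powr (\<delta> - dt) * ?s powr (-(\<delta> - dt)) = 1" by (rule powr_cancel[OF s0])
      show ?thesis unfolding mult.left_commute[of "?s powr (\<delta> - dt)"] h by simp
    qed
    finally show ?thesis .
  qed
  have "\<exists>C. \<forall>x t. t > 0 \<longrightarrow> L x t \<le> C * wmeas (ww (nat \<lceil>max 0 (\<delta> - dt - \<beta>)\<rceil>)) x t / bvol x t"
    by (rule final_step[OF _ _ small big]) auto
  then obtain C where C: "\<forall>x t. t > 0 \<longrightarrow> L x t \<le> C * wmeas (ww (nat \<lceil>max 0 (\<delta> - dt - \<beta>)\<rceil>)) x t / bvol x t"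
    by (rule exE)
  show ?thesis
  proof (intro exI[of _ C] allI impI)
    fix x :: 'a and t :: real assume t: "t > 0"
    have Lb: "L x t \<le> C * wmeas (ww (nat \<lceil>max 0 (\<delta> - dt - \<beta>)\<rceil>)) x t / bvol x t"
      using C t by simp
    show "let I = (\<integral>\<^sup>+ y. ennreal (vv y powr p / (bvol x t powr (1 / real DIM('a)) + norm (x - y)) powr (p * \<beta>)) \<partial>lebesgue)
     in I < \<infinity> \<and> bvol x t powr ((\<delta> - dt) / real DIM('a)) * enn2real I powr (1 / p)
        \<le> C * wmeas (ww (nat \<lceil>max 0 (\<delta> - dt - \<beta>)\<rceil>)) x t / bvol x t"
      unfolding Let_def
    proof (intro conjI)
      show "(\<integral>\<^sup>+ y. ennreal (vv y powr p / (bvol x t powr (1 / real DIM('a)) + norm (x - y)) powr (p * \<beta>)) \<partial>lebesgue) < \<infinity>"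
        using Ifin[OF t, of x] unfolding I_def by simp
      show "bvol x t powr ((\<delta> - dt) / real DIM('a)) * enn2real (\<integral>\<^sup>+ y. ennreal (vv y powr p / (bvol x t powr (1 / real DIM('a)) + norm (x - y)) powr (p * \<beta>)) \<partial>lebesgue) powr (1 / p)
        \<le> C * wmeas (ww (nat \<lceil>max 0 (\<delta> - dt - \<beta>)\<rceil>)) x t / bvol x t"
        using Lb unfolding L_def I_def by simp
    qed
  qed
qed

theorem theorem3p10:
  fixes \<alpha> \<eta> \<delta> :: real and m :: nat
  assumes "0 \<le> \<alpha>" "\<alpha> < real DIM('a::euclidean_space)"
    and "0 < \<eta>" "\<eta> \<le> 1"
    and "0 < \<delta>" "\<delta> < \<eta>"
    and "m > 0 \<longrightarrow> \<delta> < (real DIM('a) - \<alpha>) / real m"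
  shows "\<forall>(r::ereal) (dt::real). 1 \<le> r \<longrightarrow>
           dt \<le> \<delta> \<longrightarrow> dt \<le> (real m * \<delta> + \<alpha>) - n_over (real DIM('a)) r \<longrightarrow>
           \<not> (dt = \<delta> \<and> (real m * \<delta> + \<alpha>) - n_over (real DIM('a)) r = \<delta>) \<longrightarrow>
           (\<exists>(w::'a \<Rightarrow> real) v. weight w \<and> weight v \<and> \<not> (AE y in lebesgue. v y = 0) \<and>
              H_cond r (real m * \<delta> + \<alpha>) dt \<delta> w v)"
proof (intro allI impI)
  fix r :: ereal and dt :: real
  assume r1: "1 \<le> r" and d1: "dt \<le> \<delta>"
    and d2: "dt \<le> (real m * \<delta> + \<alpha>) - n_over (real DIM('a)) r"
    and d3: "\<not> (dt = \<delta> \<and> (real m * \<delta> + \<alpha>) - n_over (real DIM('a)) r = \<delta>)"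
  let ?n = "real DIM('a)"
  let ?a = "real m * \<delta> + \<alpha>"
  let ?\<beta> = "real DIM('a) - (real m * \<delta> + \<alpha>) + \<delta>"
  let ?e = "\<delta> - dt - ?\<beta>"
  let ?N = "n_over (real DIM('a)) r"
  have an: "?a < ?n"
  proof (cases "m > 0")
    case True
    then have "\<delta> < (?n - \<alpha>) / real m" using assms(7) by simp
    then have "real m * \<delta> < ?n - \<alpha>" using True by (simp add: field_simps)
    then show ?thesis by simp
  next
    case False then show ?thesis using assms(2) by simp
  qed
  have b0: "?\<beta> > 0" using an assms(5) by simp
  show "\<exists>(w::'a \<Rightarrow> real) v. weight w \<and> weight v \<and> \<not> (AE y in lebesgue. v y = 0) \<and>
              H_cond r (real m * \<delta> + \<alpha>) dt \<delta> w v"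
  proof (cases "r = 1")
    case True
    have "?N = ?n" unfolding True n_over_def by simp
    then have e0: "?e \<ge> 0" using d2 by simp
    obtain C where C: "\<forall>(x::'a) t. t > 0 \<longrightarrow>
      (let S = esssup lebesgue (\<lambda>y. ereal (vv y / (bvol x t powr (1 / real DIM('a)) + norm (x - y)) powr ?\<beta>))
       in S < \<infinity> \<and> bvol x t powr ((\<delta> - dt) / real DIM('a)) * real_of_ereal S
          \<le> C * wmeas (ww (nat \<lceil>max 0 ?e\<rceil>)) x t / bvol x t)"
      using case_r1[OF b0 e0, where 'a='a] by (elim exE)
    have HC: "H_cond r ?a dt \<delta> (ww (nat \<lceil>max 0 ?e\<rceil>) :: 'a \<Rightarrow> real) vv"
      unfolding H_cond_def Let_def if_P[OF True]
      using C[unfolded Let_def] by (intro exI[of _ C])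
    show ?thesis
      by (intro exI[of _ "ww (nat \<lceil>max 0 ?e\<rceil>)"] exI[of _ vv] conjI weight_ww weight_vv vv_not_AE HC)
  next
    case False
    let ?p = "conj_exp r"
    have key: "?p > 0 \<and> ?p * (?n - ?N) = ?n"
    proof (cases "r = \<infinity>")
      case True
      then show ?thesis unfolding conj_exp_def n_over_def by simp
    next
      case rinf: False
      obtain \<rho> where r\<rho>: "r = ereal \<rho>" using r1 rinf by (cases r) auto
      have \<rho>1: "\<rho> > 1" using r1 False r\<rho> by auto
      have p: "?p = \<rho> / (\<rho> - 1)" unfolding conj_exp_def using r\<rho> by simp
      have N: "?N = ?n / \<rho>" unfolding n_over_def using r\<rho> by simp
      show ?thesis unfolding p N using \<rho>1 by (auto simp: field_simps)
    qed
    have p0: "?p > 0" using key by simp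
    have pk: "?p * (?n - ?N) = ?n" using key by simp
    have eq1: "?p * ?\<beta> - ?n = ?p * (\<delta> - ?a + ?N)"
      using pk by (simp add: algebra_simps)
    have c1: "?p * (\<delta> - ?a + ?N) \<le> ?p * (\<delta> - dt)"
      using p0 d2 by (intro mult_left_mono) auto
    have c2: "?p * (\<delta> - dt) > 0" if h: "?p * ?\<beta> = ?n"
    proof -
      have "?p * (\<delta> - ?a + ?N) = 0" using eq1 h by simp
      then have "?a - ?N = \<delta>" using p0 by simp
      then have "dt \<noteq> \<delta>" using d3 by auto
      then have "\<delta> - dt > 0" using d1 by simp
      then show ?thesis using p0 by simp
    qed
    have c1': "?p * ?\<beta> > ?n \<Longrightarrow> ?p * ?\<beta> - ?n \<le> ?p * (\<delta> - dt)" using eq1 c1 by simp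
    have "\<exists>C. \<forall>(x::'a) t. t > 0 \<longrightarrow>
      (let I = (\<integral>\<^sup>+ y. ennreal (vv y powr ?p / (bvol x t powr (1 / real DIM('a)) + norm (x - y)) powr (?p * ?\<beta>)) \<partial>lebesgue)
       in I < \<infinity> \<and> bvol x t powr ((\<delta> - dt) / real DIM('a)) * enn2real I powr (1 / ?p)
          \<le> C * wmeas (ww (nat \<lceil>max 0 ?e\<rceil>)) x t / bvol x t)"
      by (rule case_rp[OF p0 b0 d1 c1' c2])
    then obtain C where C: "\<forall>(x::'a) t. t > 0 \<longrightarrow>
      (let I = (\<integral>\<^sup>+ y. ennreal (vv y powr ?p / (bvol x t powr (1 / real DIM('a)) + norm (x - y)) powr (?p * ?\<beta>)) \<partial>lebesgue)
       in I < \<infinity> \<and> bvol x t powr ((\<delta> - dt) / real DIM('a)) * enn2real I powr (1 / ?p)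
          \<le> C * wmeas (ww (nat \<lceil>max 0 ?e\<rceil>)) x t / bvol x t)"
      by (rule exE)
    have HC: "H_cond r ?a dt \<delta> (ww (nat \<lceil>max 0 ?e\<rceil>) :: 'a \<Rightarrow> real) vv"
      unfolding H_cond_def Let_def if_not_P[OF False]
      using C[unfolded Let_def] by (intro exI[of _ C])
    show ?thesis
      by (intro exI[of _ "ww (nat \<lceil>max 0 ?e\<rceil>)"] exI[of _ vv] conjI weight_ww weight_vv vv_not_AE HC)
  qed
qed

end
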